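(* The set $T^1(\Sigma)$ of isomorphism types of pruned $\Sigma$-trees is generated as a $(2,1,1,0)$-algebra (under pruned multiplication, $+$, $*$ and the trivial tree as identity constant) by the set $\Sigma$ of base trees.
   Context: Let $\Sigma$ be a set. A $\Sigma$-tree is a finite directed graph whose underlying undirected graph is a tree, edges labelled by elements of $\Sigma$, with distinguished start and end vertices such that there is a (possibly empty) directed path from start to end vertex. The trivial tree has a single vertex. A base tree has exactly one edge, its start vertex being the initial vertex of the edge and its end vertex the terminal vertex; the base tree labelled $a$ is identified with $a\in\Sigma$. A morphism $X\to Y$ maps vertices to vertices and edges to edges, preserving initial vertex, terminal vertex and label of each edge, and mapping start/end vertex to start/end vertex; isomorphisms are morphisms bijective on vertices and edges. A retraction is an idempotent morphism $X\to X$, its image a retract; $X$ is pruned if it admits no non-identity retraction. Every tree $X$ has a pruned retract, unique up to isomorphism, with isomorphism type $\overline{X}$. Unpruned operations: $X\times Y$ identifies the end vertex of (a copy of) $X$ with the start vertex of (a disjoint copy of) $Y$, start vertex that of $X$, end vertex that of $Y$; $X^{(+)}$ is $X$ with end vertex moved to the start vertex; $X^{( * )}$ is $X$ with start vertex moved to the end vertex. Pruned operations: $XY=\overline{X\times Y}$, $X^+=\overline{X^{(+)}}$, $X^*=\overline{X^{( * )}}$. *)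

theory Defs
  imports Main
begin

text \<open>The alphabet Sigma is the type 'a. Vertices are natural numbers
 (every finite tree is isomorphic to one of this form). An edge is a triple
 (initial vertex, label, terminal vertex); since the underlying undirected graph is a
 tree there are no parallel edges, so edges are determined by such triples.\<close>

record 'a stree =
  V :: "nat set"
  E :: "(nat \<times> 'a \<times> nat) set"
  st :: nat
  en :: nat

definition erel :: "(nat \<times> 'a \<times> nat) set \<Rightarrow> (nat \<times> nat) set" where
  "erel Es = {(u, v). \<exists>a. (u, a, v) \<in> Es}"

definition is_tree :: "'a stree \<Rightarrow> bool" where
  "is_tree X \<longleftrightarrow>
     finite (V X) \<and> finite (E X) \<and>
     (\<forall>(u, a, v) \<in> E X. u \<in> V X \<and> v \<in> V X) \<and>
     card (V X) = card (E X) + 1 \<and>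
     (\<forall>u\<in>V X. \<forall>v\<in>V X. (u, v) \<in> (erel (E X) \<union> (erel (E X))\<inverse>)\<^sup>*) \<and>
     st X \<in> V X \<and> en X \<in> V X \<and>
     (st X, en X) \<in> (erel (E X))\<^sup>*"

definition emap :: "(nat \<Rightarrow> nat) \<Rightarrow> nat \<times> 'a \<times> nat \<Rightarrow> nat \<times> 'a \<times> nat" where
  "emap f = (\<lambda>(u, a, v). (f u, a, f v))"

definition morphism :: "(nat \<Rightarrow> nat) \<Rightarrow> 'a stree \<Rightarrow> 'a stree \<Rightarrow> bool" where
  "morphism f X Y \<longleftrightarrow>
     f ` V X \<subseteq> V Y \<and> emap f ` E X \<subseteq> E Y \<and>
     f (st X) = st Y \<and> f (en X) = en Y"

definition iso :: "'a stree \<Rightarrow> 'a stree \<Rightarrow> bool" where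
  "iso X Y \<longleftrightarrow> (\<exists>f. morphism f X Y \<and> bij_betw f (V X) (V Y) \<and> emap f ` E X = E Y)"

definition retraction :: "(nat \<Rightarrow> nat) \<Rightarrow> 'a stree \<Rightarrow> bool" where
  "retraction r X \<longleftrightarrow> morphism r X X \<and> (\<forall>v\<in>V X. r (r v) = r v)"

definition retract_image :: "'a stree \<Rightarrow> (nat \<Rightarrow> nat) \<Rightarrow> 'a stree" where
  "retract_image X r = \<lparr>V = r ` V X, E = emap r ` E X, st = r (st X), en = r (en X)\<rparr>"

definition pruned :: "'a stree \<Rightarrow> bool" where
  "pruned X \<longleftrightarrow> (\<forall>r. retraction r X \<longrightarrow> (\<forall>v\<in>V X. r v = v))"

text \<open>Z represents the isomorphism type of the pruned retract of X.\<close>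
definition pruned_retract_of :: "'a stree \<Rightarrow> 'a stree \<Rightarrow> bool" where
  "pruned_retract_of Z X \<longleftrightarrow>
     (\<exists>r. retraction r X \<and> pruned (retract_image X r) \<and> iso (retract_image X r) Z)"

definition trivial_tree :: "'a stree" where
  "trivial_tree = \<lparr>V = {0}, E = {}, st = 0, en = 0\<rparr>"

definition base_tree :: "'a \<Rightarrow> 'a stree" where
  "base_tree a = \<lparr>V = {0, 1}, E = {(0, a, 1)}, st = 0, en = 1\<rparr>"

text \<open>Unpruned product: disjoint copies (X on even, Y on odd numbers), with the end
 vertex of X identified with the start vertex of Y.\<close>
definition times_tree :: "'a stree \<Rightarrow> 'a stree \<Rightarrow> 'a stree" where
  "times_tree X Y =
    (let g = (\<lambda>w. if w = st Y then 2 * en X else 2 * w + 1)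
     in \<lparr>V = (\<lambda>v. 2 * v) ` V X \<union> g ` V Y,
         E = emap (\<lambda>v. 2 * v) ` E X \<union> emap g ` E Y,
         st = 2 * st X, en = g (en Y)\<rparr>)"

definition plus_tree :: "'a stree \<Rightarrow> 'a stree" where
  "plus_tree X = X\<lparr>en := st X\<rparr>"

definition star_tree :: "'a stree \<Rightarrow> 'a stree" where
  "star_tree X = X\<lparr>st := en X\<rparr>"

text \<open>The sub-(2,1,1,0)-algebra of T^1(Sigma) generated by the base trees, as a
 property of representing trees (closed under isomorphism).\<close>
inductive generated :: "'a stree \<Rightarrow> bool" where
  gen_base: "iso (base_tree a) Z \<Longrightarrow> generated Z"
| gen_one: "iso trivial_tree Z \<Longrightarrow> generated Z"
| gen_mult: "generated X \<Longrightarrow> generated Y \<Longrightarrow> pruned_retract_of Z (times_tree X Y) \<Longrightarrow> generated Z"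
| gen_plus: "generated X \<Longrightarrow> pruned_retract_of Z (plus_tree X) \<Longrightarrow> generated Z"
| gen_star: "generated X \<Longrightarrow> pruned_retract_of Z (star_tree X) \<Longrightarrow> generated Z"

end

theory Submission
  imports Defs
begin


lemma conn_card:
  fixes Es :: "(nat \<times> 'a \<times> nat) set"
  assumes fE: "finite Es" and fV: "finite Vs" and v0: "v0 \<in> Vs"
    and conn: "\<forall>x\<in>Vs. (v0,x) \<in> (erel Es \<union> (erel Es)\<inverse>)\<^sup>*"
  shows "card Vs \<le> card Es + 1"
proof -
  let ?R = "erel Es \<union> (erel Es)\<inverse>"
  define d where "d x = (LEAST n. (v0,x) \<in> ?R^^n)" for x
  have dR: "(v0,x) \<in> ?R^^(d x)" if "(v0,x) \<in> ?R\<^sup>*" for x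
    using that unfolding d_def by (metis LeastI rtrancl_power)
  have dmin: "d x \<le> n" if "(v0,x) \<in> ?R^^n" for x n
    unfolding d_def by (rule Least_le) (rule that)
  have pred: "\<exists>y a. d x = Suc (d y) \<and> ((y,a,x) \<in> Es \<or> (x,a,y) \<in> Es)"
    if xV: "x \<in> Vs" and xn: "x \<noteq> v0" for x
  proof -
    have r: "(v0,x) \<in> ?R^^(d x)" using dR conn xV by blast
    obtain m where m: "d x = Suc m" using r xn by (cases "d x") auto
    then obtain y where y: "(v0,y) \<in> ?R^^m" "(y,x) \<in> ?R" using r by auto
    have "d y \<le> m" using dmin y(1) .
    moreover have "(v0,y) \<in> ?R\<^sup>*" using y(1) relpow_imp_rtrancl by blast
    hence "(v0,x) \<in> ?R^^(Suc (d y))" using dR[of y] y(2) by auto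
    hence "Suc m \<le> Suc (d y)" using dmin m by metis
    ultimately have "d y = m" by simp
    thus ?thesis using y(2) m unfolding erel_def by auto
  qed
  define pick where "pick x = (SOME e. e \<in> Es \<and> (\<exists>y a. d x = Suc (d y) \<and> (e = (y,a,x) \<or> e = (x,a,y))))" for x
  have pk: "pick x \<in> Es \<and> (\<exists>y a. d x = Suc (d y) \<and> (pick x = (y,a,x) \<or> pick x = (x,a,y)))"
    if xV: "x \<in> Vs - {v0}" for x
  proof -
    obtain y a where "d x = Suc (d y) \<and> ((y,a,x) \<in> Es \<or> (x,a,y) \<in> Es)" using pred xV by blast
    hence "\<exists>e. e \<in> Es \<and> (\<exists>y a. d x = Suc (d y) \<and> (e = (y,a,x) \<or> e = (x,a,y)))" by blast
    thus ?thesis unfolding pick_def by (rule someI_ex)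
  qed
  have inj: "inj_on pick (Vs - {v0})"
  proof (rule inj_onI)
    fix x x' assume x: "x \<in> Vs - {v0}" and x': "x' \<in> Vs - {v0}" and eq: "pick x = pick x'"
    obtain y a where A: "d x = Suc (d y)" "pick x = (y,a,x) \<or> pick x = (x,a,y)" using pk[OF x] by blast
    obtain y' a' where B: "d x' = Suc (d y')" "pick x' = (y',a',x') \<or> pick x' = (x',a',y')" using pk[OF x'] by blast
    show "x = x'" using A B eq by auto
  qed
  have "card (Vs - {v0}) \<le> card Es"
  proof (rule card_inj_on_le[OF inj])
    show "pick ` (Vs - {v0}) \<subseteq> Es" using pk by blast
  qed (rule fE)
  moreover have "card (Vs - {v0}) = card Vs - 1" using v0 by (rule card_Diff_singleton)
  moreover have "card Vs > 0" using v0 fV card_gt_0_iff by blast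
  ultimately show ?thesis by linarith
qed

lemma Rsym: "(x,y) \<in> (erel Es \<union> (erel Es)\<inverse>)\<^sup>* \<Longrightarrow> (y,x) \<in> (erel Es \<union> (erel Es)\<inverse>)\<^sup>*"
  by (metis converse_Un converse_converse rtrancl_converseI sup_commute)

definition tcomp :: "(nat\<times>'a\<times>nat) set \<Rightarrow> nat set \<Rightarrow> nat \<Rightarrow> nat set" where
  "tcomp Es Vs c = {x \<in> Vs. (c,x) \<in> (erel Es \<union> (erel Es)\<inverse>)\<^sup>*}"
definition etcomp :: "(nat\<times>'a\<times>nat) set \<Rightarrow> nat set \<Rightarrow> (nat\<times>'a\<times>nat) set" where
  "etcomp Es C = {(u,b,v) \<in> Es. u \<in> C}"

context
  fixes Es :: "(nat\<times>'a\<times>nat) set" and Vs :: "nat set" and c :: nat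
  assumes ends: "\<forall>(u,b,v)\<in>Es. u \<in> Vs \<and> v \<in> Vs" and c: "c \<in> Vs"
begin

lemma comp_closed1: "y \<in> tcomp Es Vs c \<Longrightarrow> (y,b,z) \<in> Es \<Longrightarrow> z \<in> tcomp Es Vs c"
  unfolding tcomp_def using ends by (auto simp: erel_def intro: rtrancl_into_rtrancl)

lemma comp_closed2: "y \<in> tcomp Es Vs c \<Longrightarrow> (z,b,y) \<in> Es \<Longrightarrow> z \<in> tcomp Es Vs c"
  unfolding tcomp_def using ends by (auto simp: erel_def intro: rtrancl_into_rtrancl)

lemma ecomp_ends: "(u,b,v) \<in> etcomp Es (tcomp Es Vs c) \<Longrightarrow> u \<in> tcomp Es Vs c \<and> v \<in> tcomp Es Vs c"
  unfolding etcomp_def using comp_closed1 by auto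

lemma reach_V: "(c,x) \<in> (erel Es \<union> (erel Es)\<inverse>)\<^sup>* \<Longrightarrow> x \<in> Vs"
  by (induction rule: rtrancl_induct) (use c ends in \<open>auto simp: erel_def\<close>)

lemma comp_conn: "x \<in> tcomp Es Vs c \<Longrightarrow>
   (c,x) \<in> (erel (etcomp Es (tcomp Es Vs c)) \<union> (erel (etcomp Es (tcomp Es Vs c)))\<inverse>)\<^sup>*"
proof -
  assume "x \<in> tcomp Es Vs c"
  hence "(c,x) \<in> (erel Es \<union> (erel Es)\<inverse>)\<^sup>*" unfolding tcomp_def by auto
  thus ?thesis
  proof (induction rule: rtrancl_induct)
    case base thus ?case by simp
  next
    case (step y z)
    have yC: "y \<in> tcomp Es Vs c" using step(1) reach_V unfolding tcomp_def by auto
    from step(2) have "(y,z) \<in> erel (etcomp Es (tcomp Es Vs c)) \<union> (erel (etcomp Es (tcomp Es Vs c)))\<inverse>"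
    proof
      assume "(y,z) \<in> erel Es"
      then obtain b where "(y,b,z) \<in> Es" unfolding erel_def by auto
      thus ?thesis using yC unfolding erel_def etcomp_def by auto
    next
      assume "(y,z) \<in> (erel Es)\<inverse>"
      then obtain b where "(z,b,y) \<in> Es" unfolding erel_def by auto
      moreover have "z \<in> tcomp Es Vs c" using comp_closed2 yC calculation by blast
      ultimately show ?thesis unfolding erel_def etcomp_def by auto
    qed
    thus ?case using step(3) by (rule rtrancl_into_rtrancl[rotated])
  qed
qed

end



lemma tree_ends: "is_tree X \<Longrightarrow> (u,b,v) \<in> E X \<Longrightarrow> u \<in> V X \<and> v \<in> V X"
  unfolding is_tree_def by blast

context
  fixes X :: "'a stree" and p q :: nat and a :: 'a
  assumes T: "is_tree X" and e: "(p,a,q) \<in> E X"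
begin

abbreviation "E1 \<equiv> E X - {(p,a,q)}"
abbreviation "Cp \<equiv> tcomp E1 (V X) p"
abbreviation "Cq \<equiv> tcomp E1 (V X) q"
abbreviation "Ep \<equiv> etcomp E1 Cp"
abbreviation "Eq \<equiv> etcomp E1 Cq"

lemma ends1: "\<forall>(u,b,v)\<in>E1. u \<in> V X \<and> v \<in> V X"
  using tree_ends[OF T] by blast

lemma pV: "p \<in> V X" and qV: "q \<in> V X" using tree_ends[OF T e] by auto

lemma pCp: "p \<in> Cp" and qCq: "q \<in> Cq" using pV qV unfolding tcomp_def by auto

lemma F1: "V X = Cp \<union> Cq"
proof
  show "Cp \<union> Cq \<subseteq> V X" unfolding tcomp_def by auto
  show "V X \<subseteq> Cp \<union> Cq"
  proof
    fix x assume x: "x \<in> V X"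
    have "(p,x) \<in> (erel (E X) \<union> (erel (E X))\<inverse>)\<^sup>*" using T pV x unfolding is_tree_def by blast
    hence "(p,x) \<in> (erel E1 \<union> (erel E1)\<inverse>)\<^sup>* \<or> (q,x) \<in> (erel E1 \<union> (erel E1)\<inverse>)\<^sup>*"
    proof (induction rule: rtrancl_induct)
      case base thus ?case by simp
    next
      case (step y z)
      show ?case
      proof (cases "(y,z) \<in> erel E1 \<union> (erel E1)\<inverse>")
        case True thus ?thesis using step(3) by (meson rtrancl_into_rtrancl)
      next
        case False
        with step(2) have "z = p \<or> z = q" unfolding erel_def by auto
        thus ?thesis by auto
      qed
    qed
    thus "x \<in> Cp \<union> Cq" using x unfolding tcomp_def by auto
  qed
qed

lemma fin: "finite (V X)" "finite (E X)" using T unfolding is_tree_def by auto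

lemma cardT: "card (V X) = card (E X) + 1" using T unfolding is_tree_def by auto

lemma F2: "Cp \<inter> Cq = {}"
proof (rule ccontr)
  assume "Cp \<inter> Cq \<noteq> {}"
  then obtain x where "x \<in> Cp" "x \<in> Cq" by blast
  hence px: "(p,x) \<in> (erel E1 \<union> (erel E1)\<inverse>)\<^sup>*" and qx: "(q,x) \<in> (erel E1 \<union> (erel E1)\<inverse>)\<^sup>*"
    unfolding tcomp_def by auto
  have pq: "(p,q) \<in> (erel E1 \<union> (erel E1)\<inverse>)\<^sup>*" using px Rsym[OF qx] by (rule rtrancl_trans)
  have "\<forall>x\<in>V X. (p,x) \<in> (erel E1 \<union> (erel E1)\<inverse>)\<^sup>*"
  proof
    fix y assume "y \<in> V X"
    hence "y \<in> Cp \<or> y \<in> Cq" using F1 by blast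
    thus "(p,y) \<in> (erel E1 \<union> (erel E1)\<inverse>)\<^sup>*"
    proof
      assume "y \<in> Cq"
      hence "(q,y) \<in> (erel E1 \<union> (erel E1)\<inverse>)\<^sup>*" unfolding tcomp_def by auto
      thus ?thesis using pq by (rule rtrancl_trans[rotated])
    qed (auto simp: tcomp_def)
  qed
  moreover have fE1: "finite E1" using fin(2) by simp
  ultimately have "card (V X) \<le> card E1 + 1" using conn_card[OF _ fin(1) pV] by blast
  moreover have "card (E X) = Suc (card E1)" using card_Suc_Diff1[OF fin(2) e] by (rule sym)
  ultimately show False using cardT by linarith
qed

lemma pq_ne: "p \<noteq> q" using F2 pCp qCq by blast

lemma Esplit: "E1 = Ep \<union> Eq" "Ep \<inter> Eq = {}"
proof -
  show "E1 = Ep \<union> Eq" using ends1 F1 unfolding etcomp_def by blast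
  show "Ep \<inter> Eq = {}" using F2 unfolding etcomp_def by blast
qed

lemma Ep_ends: "(u,b,v) \<in> Ep \<Longrightarrow> u \<in> Cp \<and> v \<in> Cp"
  using ecomp_ends[OF ends1 pV] by blast
lemma Eq_ends: "(u,b,v) \<in> Eq \<Longrightarrow> u \<in> Cq \<and> v \<in> Cq"
  using ecomp_ends[OF ends1 qV] by blast

lemma Cp_conn: "x \<in> Cp \<Longrightarrow> (p,x) \<in> (erel Ep \<union> (erel Ep)\<inverse>)\<^sup>*"
  using comp_conn[OF ends1 pV] by blast
lemma Cq_conn: "x \<in> Cq \<Longrightarrow> (q,x) \<in> (erel Eq \<union> (erel Eq)\<inverse>)\<^sup>*"
  using comp_conn[OF ends1 qV] by blast

lemma cards: "card Cp = card Ep + 1" "card Cq = card Eq + 1"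
proof -
  have fCp: "finite Cp" "finite Cq" by (rule finite_subset[OF _ fin(1)], simp add: tcomp_def)+
  have fEp: "finite Ep" "finite Eq" by (rule finite_subset[OF _ fin(2)], force simp add: etcomp_def)+
  have a1: "card Cp \<le> card Ep + 1" by (rule conn_card[OF fEp(1) fCp(1) pCp]) (use Cp_conn in blast)
  have a2: "card Cq \<le> card Eq + 1" by (rule conn_card[OF fEp(2) fCp(2) qCq]) (use Cq_conn in blast)
  have "card (V X) = card (Cp \<union> Cq)" using F1 by (rule arg_cong)
  also have "\<dots> = card Cp + card Cq" by (rule card_Un_disjoint[OF fCp F2])
  finally have "card (V X) = card Cp + card Cq" .
  moreover have "card E1 = card Ep + card Eq"
    using Esplit(1) card_Un_disjoint[OF fEp Esplit(2)] by (rule ssubst)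
  moreover have "card (E X) = Suc (card E1)" using card_Suc_Diff1[OF fin(2) e] by (rule sym)
  ultimately show "card Cp = card Ep + 1" "card Cq = card Eq + 1" using cardT a1 a2 by linarith+
qed

lemma dir_q: "(q,z) \<in> (erel (E X))\<^sup>* \<Longrightarrow> z \<in> Cq \<and> (q,z) \<in> (erel Eq)\<^sup>*"
proof (induction rule: rtrancl_induct)
  case base thus ?case using qCq by simp
next
  case (step y z)
  then obtain b where yz: "(y,b,z) \<in> E X" unfolding erel_def by auto
  have yq: "y \<in> Cq" using step(3) by (rule conjunct1)
  have "(y,b,z) \<noteq> (p,a,q)" using yq F2 pCp by blast
  hence "(y,b,z) \<in> Eq" using yz yq unfolding etcomp_def by blast
  hence "z \<in> Cq" using Eq_ends by blast
  moreover have "(y,z) \<in> erel Eq" using \<open>(y,b,z) \<in> Eq\<close> unfolding erel_def by blast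
  ultimately show ?case using step(3) by (meson rtrancl_into_rtrancl)
qed

end



lemma emap_id: "emap id = id" by (auto simp: emap_def fun_eq_iff)
lemma emap_id': "emap (\<lambda>x. x) = id" by (auto simp: emap_def fun_eq_iff)

lemma iso_refl: "iso X X"
  unfolding iso_def morphism_def by (rule exI[of _ id]) (simp add: emap_id)

lemma retract_image_id: "retract_image X id = X"
  by (simp add: retract_image_def emap_id)

lemma retraction_id: "retraction id X"
  unfolding retraction_def morphism_def by (simp add: emap_id)

lemma prc_self: "pruned X \<Longrightarrow> pruned_retract_of X X"
  unfolding pruned_retract_of_def
  by (rule exI[of _ id]) (simp add: retract_image_id retraction_id iso_refl)

lemma iso_pruned:
  assumes iso: "iso T X" and P: "pruned X"
    and wf: "st T \<in> V T" "en T \<in> V T" "\<forall>(u,b,v)\<in>E T. u \<in> V T \<and> v \<in> V T"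
  shows "pruned T"
  unfolding pruned_def
proof (intro allI impI ballI)
  fix r v assume r: "retraction r T" and v: "v \<in> V T"
  obtain h where mh: "morphism h T X" and bij: "bij_betw h (V T) (V X)" and eh: "emap h ` E T = E X"
    using iso unfolding iso_def by blast
  define g where "g = inv_into (V T) h"
  have gV: "g x \<in> V T" if "x \<in> V X" for x
    using that bij unfolding g_def by (meson bij_betw_apply bij_betw_inv_into)
  have hg: "h (g x) = x" if "x \<in> V X" for x
    using that bij unfolding g_def by (meson bij_betw_inv_into_right)
  have gh: "g (h x) = x" if "x \<in> V T" for x
    using that bij unfolding g_def by (meson bij_betw_inv_into_left)
  have rV: "r x \<in> V T" if "x \<in> V T" for x using r that unfolding retraction_def morphism_def by blast
  have rE: "emap r e \<in> E T" if "e \<in> E T" for e using r that unfolding retraction_def morphism_def by blast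
  have rst: "r (st T) = st T" "r (en T) = en T" using r unfolding retraction_def morphism_def by auto
  have ridem: "r (r x) = r x" if "x \<in> V T" for x using r that unfolding retraction_def by blast
  have hV: "h x \<in> V X" if "x \<in> V T" for x using bij that by (meson bij_betw_apply)
  have hst: "h (st T) = st X" "h (en T) = en X" using mh unfolding morphism_def by auto
  define r' where "r' x = h (r (g x))" for x
  have "retraction r' X"
    unfolding retraction_def morphism_def
  proof (intro conjI ballI subsetI)
    fix y assume "y \<in> r' ` V X"
    then obtain x where "x \<in> V X" "y = r' x" by blast
    thus "y \<in> V X" unfolding r'_def using gV rV hV by blast
  next
    fix y assume "y \<in> emap r' ` E X"
    then obtain e where e: "e \<in> E X" "y = emap r' e" by blast
    then obtain e0 where e0: "e0 \<in> E T" "e = emap h e0" using eh by blast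
    obtain u b w where u: "e0 = (u,b,w)" by (cases e0) auto
    have uw: "u \<in> V T" "w \<in> V T" using wf(3) e0 u by auto
    have "y = emap h (emap r e0)" using e e0 u uw gh unfolding r'_def emap_def by auto
    thus "y \<in> E X" using eh rE e0 by blast
  next
    show "r' (st X) = st X" unfolding r'_def using hst gh wf rst by metis
    show "r' (en X) = en X" unfolding r'_def using hst gh wf rst by metis
  next
    fix x assume x: "x \<in> V X"
    show "r' (r' x) = r' x" unfolding r'_def using gh gV rV x ridem by simp
  qed
  hence "r' (h v) = h v" using P hV v unfolding pruned_def by blast
  hence "h (r v) = h v" unfolding r'_def using gh v by simp
  thus "r v = v" using bij v rV unfolding bij_betw_def inj_on_def by blast
qed

lemma tree_st: "is_tree X \<Longrightarrow> st X \<in> V X \<and> en X \<in> V X"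
  unfolding is_tree_def by blast

lemma split_gen:
  assumes X: "pruned X"
    and A: "is_tree A" and B: "is_tree B"
    and VU: "V A \<union> V B = V X" and VI: "V A \<inter> V B = {en A}" and EU: "E A \<union> E B = E X"
    and sA: "st A = st X" and sB: "st B = en A" and eB: "en B = en X"
  shows "pruned A" "pruned B" "pruned_retract_of X (times_tree A B)"
proof -
  have Aends: "u \<in> V A \<and> v \<in> V A" if "(u,b,v) \<in> E A" for u b v using tree_ends[OF A that] .
  have Bends: "u \<in> V B \<and> v \<in> V B" if "(u,b,v) \<in> E B" for u b v using tree_ends[OF B that] .
  have stA: "st A \<in> V A" "en A \<in> V A" "st B \<in> V B" "en B \<in> V B" using tree_st[OF A] tree_st[OF B] by auto
  show "pruned A" unfolding pruned_def
  proof (intro allI impI ballI)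
    fix r v assume r: "retraction r A" and v: "v \<in> V A"
    have rV: "r x \<in> V A" if "x \<in> V A" for x using r that unfolding retraction_def morphism_def by blast
    have rE: "emap r e \<in> E A" if "e \<in> E A" for e using r that unfolding retraction_def morphism_def by blast
    have rst: "r (st A) = st A" "r (en A) = en A" using r unfolding retraction_def morphism_def by auto
    have ridem: "r (r x) = r x" if "x \<in> V A" for x using r that unfolding retraction_def by blast
    define r' where "r' x = (if x \<in> V A then r x else x)" for x
    have "retraction r' X"
      unfolding retraction_def morphism_def
    proof (intro conjI ballI subsetI)
      fix y assume "y \<in> r' ` V X"
      then obtain x where x: "x \<in> V X" "y = r' x" by blast
      show "y \<in> V X"
      proof (cases "x \<in> V A")
        case True thus ?thesis using x rV[OF True] VU unfolding r'_def by auto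
      qed (use x in \<open>simp add: r'_def\<close>)
    next
      fix y assume "y \<in> emap r' ` E X"
      then obtain u b w where e: "(u,b,w) \<in> E X" "y = emap r' (u,b,w)" by auto
      show "y \<in> E X"
      proof (cases "(u,b,w) \<in> E A")
        case True
        hence "y = emap r (u,b,w)" using e Aends[OF True] unfolding r'_def emap_def by simp
        thus ?thesis using rE[OF True] EU by blast
      next
        case False
        hence Bu: "(u,b,w) \<in> E B" using e EU by blast
        have "u \<in> V A \<Longrightarrow> u = en A" "w \<in> V A \<Longrightarrow> w = en A" using Bends[OF Bu] VI by blast+
        hence "r' u = u" "r' w = w" using rst unfolding r'_def by auto
        hence "y = (u,b,w)" using e unfolding emap_def by simp
        thus ?thesis using e by simp
      qed
    next
      have sXA: "st X \<in> V A" using stA(1) sA by simp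
      have "r' (st X) = r (st X)" unfolding r'_def using sXA by simp
      also have "\<dots> = st X" using rst(1) sA by simp
      finally show "r' (st X) = st X" .
      have eXB: "en X \<in> V B" using stA(4) eB by simp
      show "r' (en X) = en X"
      proof (cases "en X \<in> V A")
        case True
        hence "en X \<in> V A \<inter> V B" using eXB by blast
        hence "en X = en A" using VI by blast
        thus ?thesis unfolding r'_def using rst(2) by simp
      qed (simp add: r'_def)
    next
      fix x assume "x \<in> V X"
      show "r' (r' x) = r' x"
      proof (cases "x \<in> V A")
        case True thus ?thesis using rV[OF True] ridem[OF True] unfolding r'_def by simp
      qed (simp add: r'_def)
    qed
    moreover have "v \<in> V X" using v VU by blast
    ultimately have "r' v = v" using X unfolding pruned_def by blast
    thus "r v = v" using v unfolding r'_def by simp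
  qed
  show "pruned B" unfolding pruned_def
  proof (intro allI impI ballI)
    fix r v assume r: "retraction r B" and v: "v \<in> V B"
    have rV: "r x \<in> V B" if "x \<in> V B" for x using r that unfolding retraction_def morphism_def by blast
    have rE: "emap r e \<in> E B" if "e \<in> E B" for e using r that unfolding retraction_def morphism_def by blast
    have rst: "r (st B) = st B" "r (en B) = en B" using r unfolding retraction_def morphism_def by auto
    have ridem: "r (r x) = r x" if "x \<in> V B" for x using r that unfolding retraction_def by blast
    define r' where "r' x = (if x \<in> V B then r x else x)" for x
    have "retraction r' X"
      unfolding retraction_def morphism_def
    proof (intro conjI ballI subsetI)
      fix y assume "y \<in> r' ` V X"
      then obtain x where x: "x \<in> V X" "y = r' x" by blast
      show "y \<in> V X"
      proof (cases "x \<in> V B")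
        case True thus ?thesis using x rV[OF True] VU unfolding r'_def by auto
      qed (use x in \<open>simp add: r'_def\<close>)
    next
      fix y assume "y \<in> emap r' ` E X"
      then obtain u b w where e: "(u,b,w) \<in> E X" "y = emap r' (u,b,w)" by auto
      show "y \<in> E X"
      proof (cases "(u,b,w) \<in> E B")
        case True
        hence "y = emap r (u,b,w)" using e Bends[OF True] unfolding r'_def emap_def by simp
        thus ?thesis using rE[OF True] EU by blast
      next
        case False
        hence Au: "(u,b,w) \<in> E A" using e EU by blast
        have "u \<in> V B \<Longrightarrow> u = en A" "w \<in> V B \<Longrightarrow> w = en A" using Aends[OF Au] VI by blast+
        hence "r' u = u" "r' w = w" using rst sB unfolding r'_def by auto
        hence "y = (u,b,w)" using e unfolding emap_def by simp
        thus ?thesis using e by simp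
      qed
    next
      have sXA: "st X \<in> V A" using stA(1) sA by simp
      show "r' (st X) = st X"
      proof (cases "st X \<in> V B")
        case True
        hence "st X \<in> V A \<inter> V B" using sXA by blast
        hence "st X = en A" using VI by blast
        hence "st X = st B" using sB by simp
        thus ?thesis unfolding r'_def using rst(1) by simp
      qed (simp add: r'_def)
      have eXB: "en X \<in> V B" using stA(4) eB by simp
      have "r' (en X) = r (en X)" unfolding r'_def using eXB by simp
      also have "\<dots> = en X" using rst(2) eB by simp
      finally show "r' (en X) = en X" .
    next
      fix x assume "x \<in> V X"
      show "r' (r' x) = r' x"
      proof (cases "x \<in> V B")
        case True thus ?thesis using rV[OF True] ridem[OF True] unfolding r'_def by simp
      qed (simp add: r'_def)
    qed
    moreover have "v \<in> V X" using v VU by blast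
    ultimately have "r' v = v" using X unfolding pruned_def by blast
    thus "r v = v" using v unfolding r'_def by simp
  qed
  let ?T = "times_tree A B"
  define g where "g w = (if w = st B then 2 * en A else 2 * w + 1)" for w
  have VT: "V ?T = (\<lambda>v. 2 * v) ` V A \<union> g ` V B" and ET: "E ?T = emap (\<lambda>v. 2 * v) ` E A \<union> emap g ` E B"
    and sT: "st ?T = 2 * st A" and eT: "en ?T = g (en B)"
    unfolding times_tree_def g_def Let_def by simp_all
  define h where "h n = n div 2" for n :: nat
  have hg: "h (g w) = w" for w unfolding h_def g_def using sB by auto
  have h2: "h (2 * w) = w" for w unfolding h_def by simp
  have ehg: "emap h (emap g e) = e" for e using hg by (cases e) (simp add: emap_def)
  have eh2: "emap h (emap (\<lambda>v. 2 * v) e) = e" for e using h2 by (cases e) (simp add: emap_def)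
  have hVT: "h ` V ?T = V X" unfolding VT using VU by (auto simp: image_Un image_image hg h2)
  have hET: "emap h ` E ?T = E X" unfolding ET using EU by (auto simp: image_Un image_image ehg eh2)
  have inj: "inj_on h (V ?T)"
  proof (rule inj_onI)
    fix x y assume x: "x \<in> V ?T" and y: "y \<in> V ?T" and eq: "h x = h y"
    have key: "x = y" if "x' \<in> V A" "y' \<in> V B" "x = 2 * x'" "y = g y'" "h x = h y" for x y x' y'
    proof -
      have xy: "x' = y'" using that h2 hg by metis
      hence "y' = en A" using that VI by blast
      thus ?thesis using that sB xy unfolding g_def by simp
    qed
    show "x = y" using x y eq unfolding VT
      apply (elim UnE imageE)
      subgoal using h2 by metis
      subgoal using key by metis
      subgoal using key by metis
      subgoal using hg by metis
      done
  qed
  have isoTX: "iso ?T X" unfolding iso_def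
  proof (intro exI conjI)
    show "morphism h ?T X" unfolding morphism_def using hVT hET sT eT sA eB h2 hg by simp
    show "bij_betw h (V ?T) (V X)" using inj hVT unfolding bij_betw_def by blast
    show "emap h ` E ?T = E X" by (rule hET)
  qed
  have wfT: "st ?T \<in> V ?T" "en ?T \<in> V ?T" "\<forall>(u,b,v)\<in>E ?T. u \<in> V ?T \<and> v \<in> V ?T"
  proof -
    show "st ?T \<in> V ?T" unfolding sT VT using stA by blast
    show "en ?T \<in> V ?T" unfolding eT VT using stA by blast
    show "\<forall>(u,b,v)\<in>E ?T. u \<in> V ?T \<and> v \<in> V ?T" unfolding ET VT
      using Aends Bends by (auto simp: emap_def)
  qed
  have "pruned ?T" by (rule iso_pruned[OF isoTX X wfT])
  thus "pruned_retract_of X ?T" unfolding pruned_retract_of_def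
    by (intro exI[of _ id]) (simp add: retract_image_id retraction_id isoTX)
qed



definition mu :: "'a stree \<Rightarrow> nat" where
  "mu X = 2 * card (E X) + (if st X = en X then 1 else 0)"

lemma tree_conn: "is_tree X \<Longrightarrow> u \<in> V X \<Longrightarrow> v \<in> V X \<Longrightarrow> (u,v) \<in> (erel (E X) \<union> (erel (E X))\<inverse>)\<^sup>*"
  unfolding is_tree_def by blast
lemma tree_path: "is_tree X \<Longrightarrow> (st X, en X) \<in> (erel (E X))\<^sup>*"
  unfolding is_tree_def by blast
lemma tree_card: "is_tree X \<Longrightarrow> card (V X) = card (E X) + 1"
  unfolding is_tree_def by (elim conjE)
lemma tree_fin: "is_tree X \<Longrightarrow> finite (V X) \<and> finite (E X)"
  unfolding is_tree_def by (elim conjE) (rule conjI)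

lemma erel_mono: "Es \<subseteq> Es' \<Longrightarrow> erel Es \<subseteq> erel Es'"
  unfolding erel_def by auto

lemma R_mono: assumes "Es \<subseteq> Es'" and h: "(x,y) \<in> (erel Es \<union> (erel Es)\<inverse>)\<^sup>*"
  shows "(x,y) \<in> (erel Es' \<union> (erel Es')\<inverse>)\<^sup>*"
proof -
  have m: "erel Es \<subseteq> erel Es'" using assms(1) by (rule erel_mono)
  have "erel Es \<union> (erel Es)\<inverse> \<subseteq> erel Es' \<union> (erel Es')\<inverse>"
    using m converse_mono[THEN iffD2, OF m] by (rule Un_mono)
  hence "(erel Es \<union> (erel Es)\<inverse>)\<^sup>* \<subseteq> (erel Es' \<union> (erel Es')\<inverse>)\<^sup>*" by (rule rtrancl_mono)
  thus ?thesis using h by (rule subsetD)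
qed

lemma D_mono: assumes "Es \<subseteq> Es'" and h: "(x,y) \<in> (erel Es)\<^sup>*" shows "(x,y) \<in> (erel Es')\<^sup>*"
proof -
  have "erel Es \<subseteq> erel Es'" using assms(1) by (rule erel_mono)
  hence "(erel Es)\<^sup>* \<subseteq> (erel Es')\<^sup>*" by (rule rtrancl_mono)
  thus ?thesis using h by (rule subsetD)
qed

lemma mk_tree:
  fixes Es :: "(nat \<times> 'a \<times> nat) set"
  assumes "finite Vs" "finite Es" "\<forall>(u,b,v)\<in>Es. u\<in>Vs \<and> v\<in>Vs" "card Vs = card Es + 1"
    and c: "c \<in> Vs" and conn: "\<forall>x\<in>Vs. (c,x) \<in> (erel Es \<union> (erel Es)\<inverse>)\<^sup>*"
    and "s0 \<in> Vs" "e0 \<in> Vs" "(s0,e0) \<in> (erel Es)\<^sup>*"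
  shows "is_tree \<lparr>V = Vs, E = Es, st = s0, en = e0\<rparr>"
proof -
  have "\<forall>u\<in>Vs. \<forall>v\<in>Vs. (u,v) \<in> (erel Es \<union> (erel Es)\<inverse>)\<^sup>*"
  proof (intro ballI)
    fix u v assume "u \<in> Vs" "v \<in> Vs"
    hence "(u,c) \<in> (erel Es \<union> (erel Es)\<inverse>)\<^sup>*" "(c,v) \<in> (erel Es \<union> (erel Es)\<inverse>)\<^sup>*"
      using conn Rsym by blast+
    thus "(u,v) \<in> (erel Es \<union> (erel Es)\<inverse>)\<^sup>*" by (rule rtrancl_trans)
  qed
  thus ?thesis using assms unfolding is_tree_def by (simp only: stree.select_convs)
qed

lemma tree_set_en: assumes "is_tree X" "w \<in> V X" "(st X, w) \<in> (erel (E X))\<^sup>*" shows "is_tree (X\<lparr>en := w\<rparr>)"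
proof -
  have eq: "V (X\<lparr>en := w\<rparr>) = V X" "E (X\<lparr>en := w\<rparr>) = E X" "st (X\<lparr>en := w\<rparr>) = st X" "en (X\<lparr>en := w\<rparr>) = w" by simp_all
  show ?thesis using assms unfolding is_tree_def eq by blast
qed
lemma tree_set_st: assumes "is_tree X" "w \<in> V X" "(w, en X) \<in> (erel (E X))\<^sup>*" shows "is_tree (X\<lparr>st := w\<rparr>)"
proof -
  have eq: "V (X\<lparr>st := w\<rparr>) = V X" "E (X\<lparr>st := w\<rparr>) = E X" "st (X\<lparr>st := w\<rparr>) = w" "en (X\<lparr>st := w\<rparr>) = en X" by simp_all
  show ?thesis using assms unfolding is_tree_def eq by blast
qed

lemma pruned_set_en: assumes "pruned X" "st X = en X" shows "pruned (X\<lparr>en := w\<rparr>)"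
  unfolding pruned_def
proof (intro allI impI)
  fix r assume r: "retraction r (X\<lparr>en := w\<rparr>)"
  have eq: "V (X\<lparr>en := w\<rparr>) = V X" "E (X\<lparr>en := w\<rparr>) = E X" "st (X\<lparr>en := w\<rparr>) = st X" "en (X\<lparr>en := w\<rparr>) = w" by simp_all
  have "retraction r X" unfolding retraction_def morphism_def
  proof (intro conjI)
    show "r ` V X \<subseteq> V X" "emap r ` E X \<subseteq> E X" "\<forall>v\<in>V X. r (r v) = r v"
      using r unfolding retraction_def morphism_def eq by blast+
    have "r (st X) = st X" using r unfolding retraction_def morphism_def eq by blast
    thus "r (st X) = st X" "r (en X) = en X" using assms(2) by simp_all
  qed
  thus "\<forall>v\<in>V (X\<lparr>en := w\<rparr>). r v = v" using assms(1) unfolding pruned_def eq by blast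
qed

lemma pruned_set_st: assumes "pruned X" "st X = en X" shows "pruned (X\<lparr>st := w\<rparr>)"
  unfolding pruned_def
proof (intro allI impI)
  fix r assume r: "retraction r (X\<lparr>st := w\<rparr>)"
  have eq: "V (X\<lparr>st := w\<rparr>) = V X" "E (X\<lparr>st := w\<rparr>) = E X" "en (X\<lparr>st := w\<rparr>) = en X" "st (X\<lparr>st := w\<rparr>) = w" by simp_all
  have "retraction r X" unfolding retraction_def morphism_def
  proof (intro conjI)
    show "r ` V X \<subseteq> V X" "emap r ` E X \<subseteq> E X" "\<forall>v\<in>V X. r (r v) = r v"
      using r unfolding retraction_def morphism_def eq by blast+
    have "r (en X) = en X" using r unfolding retraction_def morphism_def eq by blast
    thus "r (st X) = st X" "r (en X) = en X" using assms(2) by simp_all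
  qed
  thus "\<forall>v\<in>V (X\<lparr>st := w\<rparr>). r v = v" using assms(1) unfolding pruned_def eq by blast
qed



lemma case_trivial:
  assumes T: "is_tree X" and E0: "E X = {}"
  shows "generated X"
proof -
  have c: "card (V X) = 1" using tree_card[OF T] E0 by simp
  have sV: "st X \<in> V X" "en X \<in> V X" using tree_st[OF T] by auto
  have VX: "V X = {st X}" using c sV(1) by (metis card_1_singletonE singletonD)
  have eX: "en X = st X" using sV(2) VX by blast
  have "iso trivial_tree X" unfolding iso_def morphism_def trivial_tree_def
  proof (intro exI[of _ "\<lambda>_. st X"] conjI)
    show "bij_betw (\<lambda>_. st X) (V \<lparr>V = {0}, E = {}, st = 0, en = 0\<rparr>) (V X)"
      unfolding VX by (simp add: bij_betw_def)
  qed (simp_all add: VX E0 eX)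
  thus ?thesis by (rule gen_one)
qed

lemma main:
  fixes X :: "'a stree"
  shows "mu X = n \<Longrightarrow> is_tree X \<Longrightarrow> pruned X \<Longrightarrow> generated X"
proof (induction n arbitrary: X rule: less_induct)
  case (less n X)
  have IH: "\<And>Y :: 'a stree. mu Y < mu X \<Longrightarrow> is_tree Y \<Longrightarrow> pruned Y \<Longrightarrow> generated Y"
  proof -
    fix Y :: "'a stree" assume h: "mu Y < mu X" "is_tree Y" "pruned Y"
    have "mu Y < n" using h(1) less.prems(1) by simp
    thus "generated Y" using less.IH[of "mu Y" Y] h(2,3) by blast
  qed
  have T: "is_tree X" and P: "pruned X" using less.prems by auto
  have finV: "finite (V X)" and finE: "finite (E X)" using tree_fin[OF T] by auto
  have sV: "st X \<in> V X" "en X \<in> V X" using tree_st[OF T] by auto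
  show ?case
  proof (cases "E X = {}")
    case True thus ?thesis using case_trivial T by blast
  next
    case Ene: False
    show ?thesis
    proof (cases "st X = en X")
      case se: True
      have "card (E X) > 0" using Ene finE by auto
      hence "card (V X) \<ge> 2" using tree_card[OF T] by simp
      have "\<exists>x\<in>V X. x \<noteq> st X"
      proof (rule ccontr)
        assume "\<not> ?thesis"
        hence "V X \<subseteq> {st X}" by blast
        hence "card (V X) \<le> card {st X}" by (rule card_mono[rotated]) simp
        hence "card (V X) \<le> 1" by simp
        thus False using \<open>card (V X) \<ge> 2\<close> by simp
      qed
      then obtain x where x: "x \<in> V X" "x \<noteq> st X" by blast
      have "(st X, x) \<in> (erel (E X) \<union> (erel (E X))\<inverse>)\<^sup>*" using tree_conn[OF T sV(1) x(1)] .
      hence "\<exists>y. (st X, y) \<in> erel (E X) \<union> (erel (E X))\<inverse>"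
        using x(2) by (cases rule: converse_rtranclE) auto
      then obtain y where "(st X, y) \<in> erel (E X) \<union> (erel (E X))\<inverse>" by blast
      then obtain b w where bw: "(st X, b, w) \<in> E X \<or> (w, b, st X) \<in> E X"
        unfolding erel_def by blast
      show ?thesis
      proof (cases "(st X, b, w) \<in> E X")
        case True
        let ?Y = "X\<lparr>en := w\<rparr>"
        have wV: "w \<in> V X" using tree_ends[OF T True] by blast
        have ne: "st X \<noteq> w" using pq_ne[OF T True] .
        have path: "(st X, w) \<in> (erel (E X))\<^sup>*" using True unfolding erel_def by blast
        have TY: "is_tree ?Y" by (rule tree_set_en[OF T wV path])
        have PY: "pruned ?Y" by (rule pruned_set_en[OF P se])
        have "mu ?Y < mu X" using ne se unfolding mu_def by simp
        hence GY: "generated ?Y" using IH TY PY by blast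
        have "plus_tree ?Y = X" using se unfolding plus_tree_def by simp
        hence "pruned_retract_of X (plus_tree ?Y)" using prc_self[OF P] by simp
        thus ?thesis using GY by (rule gen_plus[rotated])
      next
        case False
        hence in_: "(w, b, st X) \<in> E X" using bw by blast
        let ?Y = "X\<lparr>st := w\<rparr>"
        have wV: "w \<in> V X" using tree_ends[OF T in_] by blast
        have ne: "w \<noteq> st X" using pq_ne[OF T in_] .
        have path: "(w, en X) \<in> (erel (E X))\<^sup>*" using in_ se unfolding erel_def by auto
        have TY: "is_tree ?Y" by (rule tree_set_st[OF T wV path])
        have PY: "pruned ?Y" by (rule pruned_set_st[OF P se])
        have "mu ?Y < mu X" using ne se unfolding mu_def by simp
        hence GY: "generated ?Y" using IH TY PY by blast
        have "star_tree ?Y = X" using se unfolding star_tree_def by simp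
        hence "pruned_retract_of X (star_tree ?Y)" using prc_self[OF P] by simp
        thus ?thesis using GY by (rule gen_star[rotated])
      qed
    next
      case sne: False
      have "\<exists>w. (st X, w) \<in> erel (E X) \<and> (w, en X) \<in> (erel (E X))\<^sup>*"
        using tree_path[OF T] sne by (cases rule: converse_rtranclE) auto
      then obtain w where "(st X, w) \<in> erel (E X)" and wen: "(w, en X) \<in> (erel (E X))\<^sup>*" by blast
      then obtain a where e: "(st X, a, w) \<in> E X" unfolding erel_def by blast
      define E1 where "E1 = E X - {(st X, a, w)}"
      define Cp where "Cp = tcomp E1 (V X) (st X)"
      define Cq where "Cq = tcomp E1 (V X) w"
      define Ep where "Ep = etcomp E1 Cp"
      define Eq where "Eq = etcomp E1 Cq"
      have F1': "V X = Cp \<union> Cq" unfolding Cp_def Cq_def E1_def by (rule F1[OF T e])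
      have F2': "Cp \<inter> Cq = {}" unfolding Cp_def Cq_def E1_def by (rule F2[OF T e])
      have ne: "st X \<noteq> w" by (rule pq_ne[OF T e])
      have pC: "st X \<in> Cp" unfolding Cp_def E1_def by (rule pCp[OF T e])
      have qC: "w \<in> Cq" unfolding Cq_def E1_def by (rule qCq[OF T e])
      have ES1: "E1 = Ep \<union> Eq" unfolding Ep_def Eq_def Cp_def Cq_def E1_def by (rule Esplit(1)[OF T e])
      have ES2: "Ep \<inter> Eq = {}" unfolding Ep_def Eq_def Cp_def Cq_def E1_def by (rule Esplit(2)[OF T e])
      have EpE: "\<forall>(u,b,v)\<in>Ep. u \<in> Cp \<and> v \<in> Cp" unfolding Ep_def Cp_def E1_def using Ep_ends[OF T e] by blast
      have EqE: "\<forall>(u,b,v)\<in>Eq. u \<in> Cq \<and> v \<in> Cq" unfolding Eq_def Cq_def E1_def using Eq_ends[OF T e] by blast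
      have CpC: "\<forall>x\<in>Cp. (st X, x) \<in> (erel Ep \<union> (erel Ep)\<inverse>)\<^sup>*" unfolding Ep_def Cp_def E1_def using Cp_conn[OF T e] by blast
      have CqC: "\<forall>x\<in>Cq. (w, x) \<in> (erel Eq \<union> (erel Eq)\<inverse>)\<^sup>*" unfolding Eq_def Cq_def E1_def using Cq_conn[OF T e] by blast
      have cp: "card Cp = card Ep + 1" unfolding Ep_def Cp_def E1_def by (rule cards(1)[OF T e])
      have cq: "card Cq = card Eq + 1" unfolding Eq_def Cq_def E1_def by (rule cards(2)[OF T e])
      have dq: "en X \<in> Cq \<and> (w, en X) \<in> (erel Eq)\<^sup>*" unfolding Eq_def Cq_def E1_def by (rule dir_q[OF T e wen])
      have CpV: "Cp \<subseteq> V X" "Cq \<subseteq> V X" using F1' by auto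
      have fCp: "finite Cp" "finite Cq" using CpV finV finite_subset by auto
      have E1E: "E1 \<subseteq> E X" unfolding E1_def by blast
      have fEp: "finite Ep" "finite Eq" using ES1 E1E finE finite_subset by auto
      have EX: "E X = insert (st X, a, w) E1" unfolding E1_def using e by blast
      have eE1: "(st X, a, w) \<notin> E1" unfolding E1_def by blast
      have fE1: "finite E1" using E1E finE finite_subset by auto
      have cE: "card (E X) = card Ep + card Eq + 1"
      proof -
        have "card (E X) = Suc (card E1)" unfolding EX using fE1 eE1 by simp
        moreover have "card E1 = card Ep + card Eq" unfolding ES1 by (rule card_Un_disjoint[OF fEp ES2])
        ultimately show ?thesis by simp
      qed
      have sCq: "st X \<notin> Cq" using F2' pC by blast
      have muX: "mu X = 2 * card (E X)" using sne unfolding mu_def by simp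
      show ?thesis
      proof (cases "Ep = {}")
        case Ep_ne: False
        define A where "A = \<lparr>V = Cp, E = Ep, st = st X, en = st X\<rparr>"
        define B where "B = \<lparr>V = insert (st X) Cq, E = insert (st X, a, w) Eq, st = st X, en = en X\<rparr>"
        have TA: "is_tree A" unfolding A_def
          by (rule mk_tree[OF fCp(1) fEp(1) EpE cp pC CpC pC pC rtrancl_refl])
        have TB: "is_tree B" unfolding B_def
        proof (rule mk_tree)
          show "finite (insert (st X) Cq)" using fCp by simp
          show "finite (insert (st X, a, w) Eq)" using fEp by simp
          show "\<forall>(u,b,v)\<in>insert (st X, a, w) Eq. u \<in> insert (st X) Cq \<and> v \<in> insert (st X) Cq"
            using EqE qC by blast
          have "(st X, a, w) \<notin> Eq" using eE1 ES1 by blast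
          thus "card (insert (st X) Cq) = card (insert (st X, a, w) Eq) + 1"
            using cq sCq fCp fEp by simp
          show "st X \<in> insert (st X) Cq" by simp
          have sw: "(st X, w) \<in> erel (insert (st X, a, w) Eq) \<union> (erel (insert (st X, a, w) Eq))\<inverse>"
            unfolding erel_def by blast
          show "\<forall>x\<in>insert (st X) Cq. (st X, x) \<in> (erel (insert (st X, a, w) Eq) \<union> (erel (insert (st X, a, w) Eq))\<inverse>)\<^sup>*"
          proof
            fix x assume "x \<in> insert (st X) Cq"
            moreover have "(st X, x) \<in> (erel (insert (st X, a, w) Eq) \<union> (erel (insert (st X, a, w) Eq))\<inverse>)\<^sup>*" if xq: "x \<in> Cq"
            proof -
              have "(w, x) \<in> (erel (insert (st X, a, w) Eq) \<union> (erel (insert (st X, a, w) Eq))\<inverse>)\<^sup>*"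
                using R_mono[of Eq "insert (st X, a, w) Eq"] CqC xq by blast
              with sw show ?thesis by (rule converse_rtrancl_into_rtrancl)
            qed
            ultimately show "(st X, x) \<in> (erel (insert (st X, a, w) Eq) \<union> (erel (insert (st X, a, w) Eq))\<inverse>)\<^sup>*"
              by blast
          qed
          show "en X \<in> insert (st X) Cq" using dq by blast
          have "(st X, w) \<in> erel (insert (st X, a, w) Eq)" unfolding erel_def by blast
          moreover have "(w, en X) \<in> (erel (insert (st X, a, w) Eq))\<^sup>*"
            using D_mono[of Eq "insert (st X, a, w) Eq"] dq by blast
          ultimately show "(st X, en X) \<in> (erel (insert (st X, a, w) Eq))\<^sup>*"
            by (rule converse_rtrancl_into_rtrancl)
        qed simp
        have VU: "V A \<union> V B = V X" unfolding A_def B_def using F1' pC by auto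
        have VI: "V A \<inter> V B = {en A}" unfolding A_def B_def using F2' pC by auto
        have EU: "E A \<union> E B = E X" unfolding A_def B_def using EX ES1 by auto
        have sp: "st A = st X" "st B = en A" "en B = en X" unfolding A_def B_def by simp_all
        note S = split_gen[OF P TA TB VU VI EU sp]
        have cEp: "card Ep \<ge> 1" using Ep_ne fEp by (simp add: Suc_le_eq card_gt_0_iff)
        have "mu A < mu X" unfolding muX cE unfolding mu_def A_def by simp
        hence GA: "generated A" using IH TA S(1) by blast
        have "(st X, a, w) \<notin> Eq" using eE1 ES1 by blast
        hence ci: "card (insert (st X, a, w) Eq) = Suc (card Eq)" using fEp(2) by simp
        have "mu B < mu X" unfolding muX cE unfolding mu_def B_def using cEp sne ci by simp
        hence GB: "generated B" using IH TB S(2) by blast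
        show ?thesis by (rule gen_mult[OF GA GB S(3)])
      next
        case Ep0: True
        have "card Cp = 1" using cp Ep0 by simp
        then obtain z where "Cp = {z}" by (rule card_1_singletonE)
        hence Cp1: "Cp = {st X}" using pC by blast
        show ?thesis
        proof (cases "Eq = {}")
          case Eq_ne: False
          define A where "A = \<lparr>V = {st X, w}, E = {(st X, a, w)}, st = st X, en = w\<rparr>"
          define B where "B = \<lparr>V = Cq, E = Eq, st = w, en = en X\<rparr>"
          have TA: "is_tree A" unfolding A_def
          proof (rule mk_tree)
            show "card {st X, w} = card {(st X, a, w)} + 1" using ne by simp
            show "\<forall>x\<in>{st X, w}. (st X, x) \<in> (erel {(st X, a, w)} \<union> (erel {(st X, a, w)})\<inverse>)\<^sup>*"
              unfolding erel_def by auto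
            show "(st X, w) \<in> (erel {(st X, a, w)})\<^sup>*" unfolding erel_def by auto
          qed auto
          have TB: "is_tree B" unfolding B_def
            by (rule mk_tree[OF fCp(2) fEp(2) EqE cq qC CqC qC]) (use dq in auto)
          have VU: "V A \<union> V B = V X" unfolding A_def B_def using F1' Cp1 qC by auto
          have VI: "V A \<inter> V B = {en A}" unfolding A_def B_def using sCq qC by auto
          have EU: "E A \<union> E B = E X" unfolding A_def B_def using EX ES1 Ep0 by auto
          have sp: "st A = st X" "st B = en A" "en B = en X" unfolding A_def B_def by simp_all
          note S = split_gen[OF P TA TB VU VI EU sp]
          have cEq: "card Eq \<ge> 1" using Eq_ne fEp by (simp add: Suc_le_eq card_gt_0_iff)
          have "mu A < mu X" unfolding muX cE unfolding mu_def A_def using ne cEq Ep0 by simp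
          hence GA: "generated A" using IH TA S(1) by blast
          have "mu B < mu X" unfolding muX cE unfolding mu_def B_def using Ep0 by simp
          hence GB: "generated B" using IH TB S(2) by blast
          show ?thesis by (rule gen_mult[OF GA GB S(3)])
        next
          case Eq0: True
          have "card Cq = 1" using cq Eq0 by simp
        then obtain z where "Cq = {z}" by (rule card_1_singletonE)
        hence Cq1: "Cq = {w}" using qC by blast
          have VX: "V X = {st X, w}" using F1' Cp1 Cq1 by auto
          have EX1: "E X = {(st X, a, w)}" using EX ES1 Ep0 Eq0 by auto
          have enw: "en X = w" using dq Cq1 by auto
          have "iso (base_tree a) X" unfolding iso_def morphism_def base_tree_def
          proof (intro exI[of _ "\<lambda>n. if n = 0 then st X else w"] conjI)
            show "bij_betw (\<lambda>n. if n = 0 then st X else w) (V \<lparr>V = {0, 1}, E = {(0, a, 1)}, st = 0, en = 1\<rparr>) (V X)"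
              unfolding VX using ne by (auto simp: bij_betw_def inj_on_def)
          qed (simp_all add: VX EX1 enw emap_def)
          thus ?thesis by (rule gen_base)
        qed
      qed
    qed
  qed
qed

theorem proposition5p1:
  fixes X :: "'a stree"
  assumes "is_tree X" and "pruned X"
  shows "generated X"
  using main[OF refl assms] .


end
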